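(* Let $\mathcal{A}$ be a finite set of positive integers, let $w \leqslant z$ be real numbers, and let $m_1, \dots, m_6$ be real numbers with $(m_1, m_2) \in \mathcal{U}$, $(m_3, m_4) \in \mathcal{U}$ and $(m_5, m_6) \in \mathcal{U}$. Writing $M^r_6 = \sum_{1 \leqslant i_1 < \cdots < i_r \leqslant 6} m_{i_1}\cdots m_{i_r}$ and $P = m_1m_2m_3m_4m_5m_6$, we have $$ S(\mathcal{A}, z) \leqslant S(\mathcal{A}, w) - \frac{M^5_6 - M^4_6 + M^3_6 - M^2_6 + M^1_6 - 1}{P} \sum_{w \leqslant p_1 < z} S(\mathcal{A}_{p_1}, w) + \frac{2(M^4_6 - 3M^3_6 + 7M^2_6 - 15M^1_6 + 31)}{P} \sum_{w \leqslant p_2 < p_1 < z} S(\mathcal{A}_{p_1p_2}, w) $$ $$ - \frac{6(M^3_6 - 6M^2_6 + 25M^1_6 - 90)}{P} \sum_{w \leqslant p_3 < p_2 < p_1 < z} S(\mathcal{A}_{p_1p_2p_3}, w) + \frac{24(M^2_6 - 10M^1_6 + 65)}{P} \sum_{w \leqslant p_4 < \cdots < p_1 < z} S(\mathcal{A}_{p_1p_2p_3p_4}, w) $$ $$ - \frac{120(M^1_6 - 15)}{P} \sum_{w \leqslant p_5 < \cdots < p_1 < z} S(\mathcal{A}_{p_1\cdots p_5}, w) + \frac{720}{P} \sum_{w \leqslant p_6 < \cdots < p_1 < z} S(\mathcal{A}_{p_1\cdots p_6}, w). $$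
   Context: Throughout, $p, p_1, p_2, \dots$ denote prime numbers. For a finite set $\mathcal{A}$ of positive integers and a positive integer $d$, $\mathcal{A}_d = \{a : ad \in \mathcal{A}\}$. For real $z$, $S(\mathcal{A}, z)$ denotes the number of $a \in \mathcal{A}$ having no prime factor less than $z$. Let $T = (0,1] \cup [2,3] \cup [4,5] \cup \cdots$, i.e. $T$ is the union of $(0,1]$ and the intervals $[k-1,k]$ over all odd integers $k \geqslant 3$, and let $\mathcal{U} = \{(x_1, x_2) : x_1, x_2 \in T,\ |x_1 - x_2| \leqslant 1\}$. *)

theory Defs
  imports Complex_Main "HOL-Computational_Algebra.Primes"
begin

definition T_set :: "real set" where
  "T_set = {x. 0 < x \<and> x \<le> 1} \<union>
           {x. \<exists>k::nat. odd k \<and> 3 \<le> k \<and> real k - 1 \<le> x \<and> x \<le> real k}"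

definition U_set :: "(real \<times> real) set" where
  "U_set = {(x1, x2). x1 \<in> T_set \<and> x2 \<in> T_set \<and> \<bar>x1 - x2\<bar> \<le> 1}"

definition Ad :: "nat set \<Rightarrow> nat \<Rightarrow> nat set" where
  "Ad A d = {a. a * d \<in> A}"

definition S :: "nat set \<Rightarrow> real \<Rightarrow> nat" where
  "S A z = card {a \<in> A. \<forall>p. prime p \<and> real p < z \<longrightarrow> \<not> p dvd a}"

definition primes_in :: "real \<Rightarrow> real \<Rightarrow> nat set" where
  "primes_in w z = {p. prime p \<and> w \<le> real p \<and> real p < z}"

definition M6 :: "nat \<Rightarrow> (nat \<Rightarrow> real) \<Rightarrow> real" where
  "M6 r m = (\<Sum>I\<in>{I. I \<subseteq> {1..6} \<and> card I = r}. \<Prod>i\<in>I. m i)"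

end

theory Submission
  imports Defs
begin

lemma prodexp: "(\<Prod>i\<in>{1..6::nat}. (m i + x::real)) = (\<Sum>r\<in>{0..6}. M6 r m * x^(6-r))"
proof -
  have "(\<Prod>i\<in>{1..6::nat}. (m i + x::real)) = (\<Sum>B\<in>Pow {1..6}. (\<Prod>i\<in>B. m i) * (\<Prod>i\<in>{1..6} - B. x))"
    by (rule prod_add) simp
  also have "\<dots> = (\<Sum>B\<in>Pow {1..6::nat}. (\<Prod>i\<in>B. m i) * x^(6 - card B))"
    by (intro sum.cong refl) (auto simp: card_Diff_subset finite_subset)
  also have "\<dots> = (\<Sum>r\<in>{0..6}. \<Sum>B\<in>{B\<in>Pow {1..6::nat}. card B = r}. (\<Prod>i\<in>B. m i) * x^(6 - card B))"
    by (rule sum.group[symmetric]) (auto intro!: card_mono[where B="{1..6::nat}", simplified])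
  also have "\<dots> = (\<Sum>r\<in>{0..6}. M6 r m * x^(6-r))"
    unfolding M6_def sum_distrib_right
    by (intro sum.cong refl) auto
  finally show ?thesis .
qed
lemma M60: "M6 0 m = 1"
proof -
  have "{I. I \<subseteq> {1..6::nat} \<and> card I = 0} = {{}}"
  proof safe
    fix I :: "nat set" assume "I \<subseteq> {1..6}" "card I = 0"
    moreover then have "finite I" using finite_subset by blast
    ultimately show "\<And>x. x \<in> I \<Longrightarrow> x \<in> {}" by simp
  qed simp_all
  then show ?thesis by (simp add: M6_def)
qed
lemma M66: "M6 6 m = m 1 * m 2 * m 3 * m 4 * m 5 * m 6"
proof -
  have e: "\<And>I. I \<subseteq> {1..6::nat} \<Longrightarrow> card I = 6 \<Longrightarrow> I = {1..6}"
    by (intro card_subset_eq) auto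
  have "{I. I \<subseteq> {1..6::nat} \<and> card I = 6} = {{1..6}}"
  proof (rule set_eqI, rule iffI)
    fix I assume "I \<in> {I. I \<subseteq> {1..6::nat} \<and> card I = 6}"
    then show "I \<in> {{1..6}}" using e by blast
  next
    fix I assume "I \<in> {{1..6::nat}}"
    then show "I \<in> {I. I \<subseteq> {1..6::nat} \<and> card I = 6}" by simp
  qed
  then have "M6 6 m = (\<Prod>i\<in>{1..6}. m i)" by (simp add: M6_def)
  also have "{1..6::nat} = {1,2,3,4,5,6}" by auto
  also have "(\<Prod>i\<in>{1,2,3,4,5,6::nat}. m i) = m 1 * m 2 * m 3 * m 4 * m 5 * m 6" by (simp add: mult.assoc)
  finally show ?thesis .
qed
lemma prodexp2: "(\<Prod>i\<in>{1..6::nat}. (m i - x::real)) = 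
   m 1 * m 2 * m 3 * m 4 * m 5 * m 6 - M6 5 m * x + M6 4 m * x^2 - M6 3 m * x^3 + M6 2 m * x^4 - M6 1 m * x^5 + x^6"
proof -
  have s: "{0..6::nat} = {0,1,2,3,4,5,6}" by auto
  have "(\<Prod>i\<in>{1..6::nat}. (m i - x::real)) = (\<Prod>i\<in>{1..6::nat}. (m i + (-x)))" by simp
  also have "\<dots> = (\<Sum>r\<in>{0..6}. M6 r m * (-x)^(6-r))" by (rule prodexp)
  also have "\<dots> = m 1 * m 2 * m 3 * m 4 * m 5 * m 6 - M6 5 m * x + M6 4 m * x^2 - M6 3 m * x^3 + M6 2 m * x^4 - M6 1 m * x^5 + x^6"
    by (simp add: s M60 M66)
  finally show ?thesis .
qed
lemma identN:
  fixes x M1 M2 M3 M4 M5 :: real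
  shows "- (M5 - M4 + M3 - M2 + M1 - 1) * x
    + (M4 - 3 * M3 + 7 * M2 - 15 * M1 + 31) * (x*(x-1))
    - (M3 - 6 * M2 + 25 * M1 - 90) * (x*(x-1)*(x-2))
    + (M2 - 10 * M1 + 65) * (x*(x-1)*(x-2)*(x-3))
    - (M1 - 15) * (x*(x-1)*(x-2)*(x-3)*(x-4))
    + (x*(x-1)*(x-2)*(x-3)*(x-4)*(x-5))
   = (- M5 * x + M4 * x^2 - M3 * x^3 + M2 * x^4 - M1 * x^5 + x^6)"
  by algebra


lemma primes_in_finite: "finite (primes_in w u)"
proof (rule finite_subset)
  show "primes_in w u \<subseteq> {..nat \<lceil>u\<rceil>}"
  proof
    fix p assume "p \<in> primes_in w u"
    then have "real p < u" by (simp add: primes_in_def)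
    then have "\<lceil>real p\<rceil> \<le> \<lceil>u\<rceil>" by (intro ceiling_mono) linarith
    then show "p \<in> {..nat \<lceil>u\<rceil>}" by (simp add: le_nat_iff)
  qed
qed simp

definition Ks :: "real \<Rightarrow> real \<Rightarrow> nat \<Rightarrow> nat set set" where
  "Ks w u k = {Q. Q \<subseteq> primes_in w u \<and> card Q = k}"

lemma Ks_finite: "finite (Ks w u k)"
proof -
  have "Ks w u k \<subseteq> Pow (primes_in w u)" by (auto simp: Ks_def)
  then show ?thesis using primes_in_finite finite_subset by blast
qed

lemma split_sum:
  fixes f :: "nat \<Rightarrow> real"
  shows "(\<Sum>Q\<in>Ks w u (Suc k). f (\<Prod>Q)) = (\<Sum>p\<in>primes_in w u. \<Sum>Q\<in>Ks w (real p) k. f (p * \<Prod>Q))"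
proof -
  have "(\<Sum>p\<in>primes_in w u. \<Sum>Q\<in>Ks w (real p) k. f (p * \<Prod>Q))
      = (\<Sum>(p,Q)\<in>Sigma (primes_in w u) (\<lambda>p. Ks w (real p) k). f (p * \<Prod>Q))"
    by (rule sum.Sigma) (auto simp: primes_in_finite Ks_finite)
  also have "\<dots> = (\<Sum>Q\<in>Ks w u (Suc k). f (\<Prod>Q))"
  proof (rule sum.reindex_bij_witness[where j="\<lambda>(p,Q). insert p Q" and i="\<lambda>Q. (Max Q, Q - {Max Q})"])
    fix a assume a: "a \<in> Sigma (primes_in w u) (\<lambda>p. Ks w (real p) k)"
    obtain p Q where pQ: "a = (p,Q)" by force
    have p: "p \<in> primes_in w u" and Q: "Q \<subseteq> primes_in w (real p)" "card Q = k"
      using a pQ by (auto simp: Ks_def)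
    have fQ: "finite Q" using Q(1) primes_in_finite finite_subset by blast
    have lt: "\<And>q. q \<in> Q \<Longrightarrow> q < p" using Q(1) by (auto simp: primes_in_def)
    have pn: "p \<notin> Q" using lt by blast
    have ltu: "\<And>q. q \<in> Q \<Longrightarrow> real q < u" using lt p by (auto simp: primes_in_def) (meson less_trans of_nat_less_iff)
    have mx: "Max (insert p Q) = p"
      using fQ lt by (intro Max_eqI) (auto simp: less_imp_le)
    show "(case (case a of (p, Q) \<Rightarrow> insert p Q) of Q \<Rightarrow> (Max Q, Q - {Max Q})) = a"
      using pQ mx pn by auto
    show "(case a of (p, Q) \<Rightarrow> insert p Q) \<in> Ks w u (Suc k)"
      using pQ p Q fQ pn ltu by (auto simp: Ks_def primes_in_def)
    show "f (\<Prod>(case a of (p, Q) \<Rightarrow> insert p Q)) = (case a of (p, Q) \<Rightarrow> f (p * \<Prod> Q))"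
      using pQ fQ pn by simp
  next
    fix b assume b: "b \<in> Ks w u (Suc k)"
    then have bs: "b \<subseteq> primes_in w u" and cb: "card b = Suc k" by (auto simp: Ks_def)
    have fb: "finite b" using bs primes_in_finite finite_subset by blast
    have ne: "b \<noteq> {}" using cb by auto
    have mb: "Max b \<in> b" using fb ne by simp
    show "(case (Max b, b - {Max b}) of (p, Q) \<Rightarrow> insert p Q) = b" using mb by auto
    have "b - {Max b} \<subseteq> primes_in w (real (Max b))"
    proof
      fix q assume q: "q \<in> b - {Max b}"
      then have "q \<le> Max b" using fb by simp
      then have "q < Max b" using q by auto
      then show "q \<in> primes_in w (real (Max b))" using q bs by (auto simp: primes_in_def)
    qed
    moreover have "card (b - {Max b}) = k" using cb mb fb by simp
    ultimately show "(Max b, b - {Max b}) \<in> Sigma (primes_in w u) (\<lambda>p. Ks w (real p) k)"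
      using mb bs by (auto simp: Ks_def)
  qed
  finally show ?thesis by simp
qed

fun nest :: "real \<Rightarrow> nat \<Rightarrow> real \<Rightarrow> (nat \<Rightarrow> real) \<Rightarrow> real" where
  "nest w 0 u f = f 1"
| "nest w (Suc k) u f = (\<Sum>p\<in>primes_in w u. nest w k (real p) (\<lambda>d. f (p * d)))"

lemma Ks0: "Ks w u 0 = {{}}"
  using primes_in_finite finite_subset by (fastforce simp: Ks_def)

lemma nest_eq: "nest w k u f = (\<Sum>Q\<in>Ks w u k. f (\<Prod>Q))"
proof (induction k arbitrary: u f)
  case 0
  then show ?case by (simp add: Ks0)
next
  case (Suc k)
  then show ?case by (simp add: split_sum)
qed

lemma prod_primes_dvd:
  fixes Q :: "nat set"
  assumes "finite Q" "\<forall>q\<in>Q. prime q"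
  shows "(\<Prod>Q) dvd a \<longleftrightarrow> (\<forall>q\<in>Q. q dvd a)"
  using assms
proof (induction Q rule: finite_induct)
  case empty
  then show ?case by simp
next
  case (insert p Q)
  have pp: "prime p" using insert by simp
  have "\<not> p dvd \<Prod>Q"
  proof
    assume "p dvd \<Prod>Q"
    then obtain q where "q \<in> Q" "p dvd q" using prime_dvd_prod_iff[OF insert(1) pp, of id] by auto
    then have "p = q" using insert(4) pp by (simp add: primes_dvd_imp_eq)
    then show False using insert(2) \<open>q \<in> Q\<close> by simp
  qed
  then have cop: "coprime p (\<Prod>Q)" using pp by (simp add: prime_imp_coprime)
  have "p * \<Prod>Q dvd a \<longleftrightarrow> p dvd a \<and> \<Prod>Q dvd a"
    using cop by (auto intro: divides_mult dest: dvd_mult_left dvd_mult_right)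
  then show ?case using insert by simp
qed

definition A0 :: "nat set \<Rightarrow> real \<Rightarrow> nat set" where
  "A0 A w = {a \<in> A. \<forall>p. prime p \<and> real p < w \<longrightarrow> \<not> p dvd a}"

lemma S_Ad:
  assumes Q: "Q \<subseteq> primes_in w z"
  shows "S (Ad A (\<Prod>Q)) w = card {a \<in> A0 A w. (\<Prod>Q) dvd a}"
proof -
  have fQ: "finite Q" using Q primes_in_finite finite_subset by blast
  have pr: "\<forall>q\<in>Q. prime q" using Q by (auto simp: primes_in_def)
  define d where "d = \<Prod>Q"
  have dpos: "d > 0" using pr by (simp add: d_def prime_gt_0_nat prod_pos)
  have dp: "\<And>p. prime p \<Longrightarrow> p dvd d \<Longrightarrow> w \<le> real p"
  proof -
    fix p :: nat assume pp: "prime p" and "p dvd d"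
    then obtain q where "q \<in> Q" "p dvd q" using prime_dvd_prod_iff[OF fQ pp, of id] by (auto simp: d_def)
    then have "p = q" using pr pp by (simp add: primes_dvd_imp_eq)
    then show "w \<le> real p" using \<open>q \<in> Q\<close> Q by (auto simp: primes_in_def)
  qed
  have "S (Ad A d) w = card ((\<lambda>b. b * d) ` {b. b * d \<in> A \<and> (\<forall>p. prime p \<and> real p < w \<longrightarrow> \<not> p dvd b)})"
    unfolding S_def Ad_def using dpos by (subst card_image) (auto simp: inj_on_def)
  also have "(\<lambda>b. b * d) ` {b. b * d \<in> A \<and> (\<forall>p. prime p \<and> real p < w \<longrightarrow> \<not> p dvd b)} = {a \<in> A0 A w. d dvd a}"
  proof (rule set_eqI, rule iffI)
    fix a assume "a \<in> (\<lambda>b. b * d) ` {b. b * d \<in> A \<and> (\<forall>p. prime p \<and> real p < w \<longrightarrow> \<not> p dvd b)}"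
    then obtain b where ab: "a = b * d" and b: "b * d \<in> A" "\<forall>p. prime p \<and> real p < w \<longrightarrow> \<not> p dvd b"
      by blast
    have "\<forall>p. prime p \<and> real p < w \<longrightarrow> \<not> p dvd a"
    proof (intro allI impI notI)
      fix p :: nat assume p: "prime p \<and> real p < w" "p dvd a"
      then have "p dvd b \<or> p dvd d" using ab by (simp add: prime_dvd_mult_iff)
      moreover have "\<not> p dvd b" using p(1) b(2) by blast
      moreover have "\<not> p dvd d" using p(1) dp by (meson not_le)
      ultimately show False by blast
    qed
    then show "a \<in> {a \<in> A0 A w. d dvd a}" using ab b(1) unfolding A0_def by simp
  next
    fix a assume a: "a \<in> {a \<in> A0 A w. d dvd a}"
    then obtain b where ab: "a = b * d" using dvdE mult.commute by (metis mem_Collect_eq)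
    have aA: "a \<in> A" and np: "\<forall>p. prime p \<and> real p < w \<longrightarrow> \<not> p dvd a" using a unfolding A0_def by auto
    have "\<forall>p. prime p \<and> real p < w \<longrightarrow> \<not> p dvd b"
      using np ab by (meson dvd_mult2)
    then have "b \<in> {b. b * d \<in> A \<and> (\<forall>p. prime p \<and> real p < w \<longrightarrow> \<not> p dvd b)}" using aA ab by simp
    then show "a \<in> (\<lambda>b. b * d) ` {b. b * d \<in> A \<and> (\<forall>p. prime p \<and> real p < w \<longrightarrow> \<not> p dvd b)}"
      using ab by blast
  qed
  finally show ?thesis by (simp add: d_def)
qed

lemma count_nest:
  assumes fA: "finite A"
  shows "nest w k z (\<lambda>d. real (S (Ad A d) w))
       = (\<Sum>a\<in>A0 A w. real (card {p\<in>primes_in w z. p dvd a} choose k))"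
proof -
  have fA0: "finite (A0 A w)" using fA by (simp add: A0_def)
  have "nest w k z (\<lambda>d. real (S (Ad A d) w)) = (\<Sum>Q\<in>Ks w z k. real (S (Ad A (\<Prod>Q)) w))"
    by (simp add: nest_eq)
  also have "\<dots> = (\<Sum>Q\<in>Ks w z k. \<Sum>a\<in>A0 A w. if (\<Prod>Q) dvd a then 1 else 0)"
    by (intro sum.cong refl) (auto simp: S_Ad Ks_def fA0 sum.If_cases Int_def)
  also have "\<dots> = (\<Sum>a\<in>A0 A w. \<Sum>Q\<in>Ks w z k. if (\<Prod>Q) dvd a then 1 else 0)"
    by (rule sum.swap)
  also have "\<dots> = (\<Sum>a\<in>A0 A w. real (card {p\<in>primes_in w z. p dvd a} choose k))"
  proof (intro sum.cong refl)
    fix a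
    have "{Q \<in> Ks w z k. (\<Prod>Q) dvd a} = {Q. Q \<subseteq> {p\<in>primes_in w z. p dvd a} \<and> card Q = k}"
    proof -
      have "\<And>Q. Q \<subseteq> primes_in w z \<Longrightarrow> (\<Prod>Q) dvd a \<longleftrightarrow> (\<forall>q\<in>Q. q dvd a)"
      proof -
        fix Q assume "Q \<subseteq> primes_in w z"
        moreover then have "finite Q" by (rule finite_subset[OF _ primes_in_finite])
        ultimately show "(\<Prod>Q) dvd a \<longleftrightarrow> (\<forall>q\<in>Q. q dvd a)"
          by (intro prod_primes_dvd) (auto simp: primes_in_def)
      qed
      then show ?thesis by (auto simp: Ks_def)
    qed
    moreover have "card {Q. Q \<subseteq> {p\<in>primes_in w z. p dvd a} \<and> card Q = k} = card {p\<in>primes_in w z. p dvd a} choose k"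
      by (rule n_subsets) (simp add: primes_in_finite)
    ultimately show "(\<Sum>Q\<in>Ks w z k. if (\<Prod>Q) dvd a then 1 else 0) = real (card {p\<in>primes_in w z. p dvd a} choose k)"
      by (simp add: sum.If_cases Ks_finite Int_def)
  qed
  finally show ?thesis .
qed



lemma T_pos: "x \<in> T_set \<Longrightarrow> 0 < x"
  by (auto simp: T_set_def)

lemma one_side:
  assumes x: "x \<in> T_set" and y: "y \<in> T_set" and d: "y \<le> x + 1"
    and xn: "x < real n" and ny: "real n < y" and n1: "1 \<le> n"
  shows False
proof -
  consider "0 < x \<and> x \<le> 1" | k where "odd k" "3 \<le> k" "real k - 1 \<le> x" "x \<le> real k"
    using x by (auto simp: T_set_def)
  then show False
  proof cases
    case 1
    consider "0 < y \<and> y \<le> 1" | j where "odd j" "3 \<le> j" "real j - 1 \<le> y" "y \<le> real j"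
      using y by (auto simp: T_set_def)
    then show False
    proof cases
      case 1 then show False using ny n1 by simp
    next
      case 2
      have "real j \<ge> 3" using 2 by simp
      then have "y \<ge> 2" using 2 by linarith
      then have "y = 2" "x = 1" using d \<open>0 < x \<and> x \<le> 1\<close> by linarith+
      then have "real n < 2" "1 < real n" using ny xn by auto
      then have "n < 2" "1 < n" by simp_all
      then show False by simp
    qed
  next
    case 2
    have "real k - 1 < real n" using 2 xn by linarith
    then have "real k < real (n + 1)" by simp
    then have "k < n + 1" by (simp only: of_nat_less_iff)
    then have kn: "k \<le> n" by simp
    have rkn: "real k \<le> real n" using kn by simp
    have "real k \<ge> 3" using 2 by simp
    consider "0 < y \<and> y \<le> 1" | j where "odd j" "3 \<le> j" "real j - 1 \<le> y" "y \<le> real j"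
      using y by (auto simp: T_set_def)
    then show False
    proof cases
      case 1 then show False using ny rkn \<open>real k \<ge> 3\<close> by linarith
    next
      case 3: 2
      have "real k < real j" using ny 3 rkn by linarith
      then have "k < j" by (simp only: of_nat_less_iff)
      then have "k + 2 \<le> j" using \<open>odd k\<close> \<open>odd j\<close> by presburger
      then have "real (k + 2) \<le> real j" by (simp only: of_nat_le_iff)
      then have "real k + 2 \<le> real j" by simp
      then have "real n < real k + 1" using 3 d 2 ny by linarith
      then have "real n < real (k + 1)" by simp
      then have "n < k + 1" by (simp only: of_nat_less_iff)
      then have "n \<le> k" by simp
      then have "real n \<le> real k" by simp
      then show False using 3 d 2 xn ny \<open>real k + 2 \<le> real j\<close> by linarith
    qed
  qed
qed

lemma pair_nonneg:
  assumes "(x, y) \<in> U_set" "1 \<le> n"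
  shows "(x - real n) * (y - real n) \<ge> 0"
proof (rule ccontr)
  assume "\<not> ?thesis"
  then have "(x < real n \<and> real n < y) \<or> (y < real n \<and> real n < x)"
    by (auto simp: mult_less_0_iff not_le)
  then show False
    using one_side[of x y n] one_side[of y x n] assms by (auto simp: U_set_def abs_le_iff)
qed

lemma lin:
  fixes P a1 a2 a3 a4 a5 b1 b2 b3 b4 b5 b6 :: real
  assumes "P \<noteq> 0"
  shows "1 - a1 / P * b1 + 2 * a2 / P * b2 - 6 * a3 / P * b3 + 24 * a4 / P * b4 - 120 * a5 / P * b5 + 720 / P * b6
    = (P - a1 * b1 + a2 * (2*b2) - a3 * (6*b3) + a4 * (24 * b4) - a5 * (120*b5) + 720 * b6) / P"
  using assms by (simp add: field_simps)
lemma b2: "2 * real (n choose 2) = real n * (real n - 1)"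
  by (simp add: binomial_gbinomial gbinomial_altdef_of_nat eval_nat_numeral prod.atLeast0_lessThan_Suc)
lemma b3: "6 * real (n choose 3) = real n * (real n - 1) * (real n - 2)"
  by (simp add: binomial_gbinomial gbinomial_altdef_of_nat eval_nat_numeral prod.atLeast0_lessThan_Suc)
lemma b4: "24 * real (n choose 4) = real n * (real n - 1) * (real n - 2) * (real n - 3)"
  by (simp add: binomial_gbinomial gbinomial_altdef_of_nat eval_nat_numeral prod.atLeast0_lessThan_Suc)
lemma b5: "120 * real (n choose 5) = real n * (real n - 1) * (real n - 2) * (real n - 3) * (real n - 4)"
  by (simp add: binomial_gbinomial gbinomial_altdef_of_nat eval_nat_numeral prod.atLeast0_lessThan_Suc)
lemma b6: "720 * real (n choose 6) = real n * (real n - 1) * (real n - 2) * (real n - 3) * (real n - 4) * (real n - 5)"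
  by (simp add: binomial_gbinomial gbinomial_altdef_of_nat eval_nat_numeral prod.atLeast0_lessThan_Suc)
lemma numer:
  fixes x P M1 M2 M3 M4 M5 :: real
  shows "P - (M5 - M4 + M3 - M2 + M1 - 1) * x
    + (M4 - 3 * M3 + 7 * M2 - 15 * M1 + 31) * (x*(x-1))
    - (M3 - 6 * M2 + 25 * M1 - 90) * (x*(x-1)*(x-2))
    + (M2 - 10 * M1 + 65) * (x*(x-1)*(x-2)*(x-3))
    - (M1 - 15) * (x*(x-1)*(x-2)*(x-3)*(x-4))
    + x*(x-1)*(x-2)*(x-3)*(x-4)*(x-5)
   = P - M5 * x + M4 * x^2 - M3 * x^3 + M2 * x^4 - M1 * x^5 + x^6"
  by algebra

theorem theorem4:
  fixes A :: "nat set" and w z :: real and m :: "nat \<Rightarrow> real"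
  assumes "finite A" and "0 \<notin> A" and "w \<le> z"
    and "(m 1, m 2) \<in> U_set" and "(m 3, m 4) \<in> U_set" and "(m 5, m 6) \<in> U_set"
  defines "P \<equiv> m 1 * m 2 * m 3 * m 4 * m 5 * m 6"
  shows "real (S A z) \<le> real (S A w)
    - (M6 5 m - M6 4 m + M6 3 m - M6 2 m + M6 1 m - 1) / P
        * (\<Sum>p1\<in>primes_in w z. real (S (Ad A p1) w))
    + 2 * (M6 4 m - 3 * M6 3 m + 7 * M6 2 m - 15 * M6 1 m + 31) / P
        * (\<Sum>p1\<in>primes_in w z. \<Sum>p2\<in>primes_in w (real p1).
             real (S (Ad A (p1 * p2)) w))
    - 6 * (M6 3 m - 6 * M6 2 m + 25 * M6 1 m - 90) / P
        * (\<Sum>p1\<in>primes_in w z. \<Sum>p2\<in>primes_in w (real p1).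
           \<Sum>p3\<in>primes_in w (real p2).
             real (S (Ad A (p1 * p2 * p3)) w))
    + 24 * (M6 2 m - 10 * M6 1 m + 65) / P
        * (\<Sum>p1\<in>primes_in w z. \<Sum>p2\<in>primes_in w (real p1).
           \<Sum>p3\<in>primes_in w (real p2). \<Sum>p4\<in>primes_in w (real p3).
             real (S (Ad A (p1 * p2 * p3 * p4)) w))
    - 120 * (M6 1 m - 15) / P
        * (\<Sum>p1\<in>primes_in w z. \<Sum>p2\<in>primes_in w (real p1).
           \<Sum>p3\<in>primes_in w (real p2). \<Sum>p4\<in>primes_in w (real p3).
           \<Sum>p5\<in>primes_in w (real p4).
             real (S (Ad A (p1 * p2 * p3 * p4 * p5)) w))
    + 720 / P
        * (\<Sum>p1\<in>primes_in w z. \<Sum>p2\<in>primes_in w (real p1).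
           \<Sum>p3\<in>primes_in w (real p2). \<Sum>p4\<in>primes_in w (real p3).
           \<Sum>p5\<in>primes_in w (real p4). \<Sum>p6\<in>primes_in w (real p5).
             real (S (Ad A (p1 * p2 * p3 * p4 * p5 * p6)) w))"
  proof -
  have mpos: "\<And>i. i \<in> {1,2,3,4,5,6::nat} \<Longrightarrow> 0 < m i"
    using assms(4-6) by (auto simp: U_set_def T_pos)
  have Ppos: "P > 0" unfolding P_def using mpos by simp
  define B0 where "B0 = A0 A w"
  define N where "N a = card {p\<in>primes_in w z. p dvd a}" for a
  have fB0: "finite B0" using assms(1) by (simp add: B0_def A0_def)
  define a1 where "a1 = M6 5 m - M6 4 m + M6 3 m - M6 2 m + M6 1 m - 1"
  define a2 where "a2 = M6 4 m - 3 * M6 3 m + 7 * M6 2 m - 15 * M6 1 m + 31"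
  define a3 where "a3 = M6 3 m - 6 * M6 2 m + 25 * M6 1 m - 90"
  define a4 where "a4 = M6 2 m - 10 * M6 1 m + 65"
  define a5 where "a5 = M6 1 m - 15"
  define F where "F n = 1 - a1 / P * real (n choose 1) + 2 * a2 / P * real (n choose 2)
     - 6 * a3 / P * real (n choose 3) + 24 * a4 / P * real (n choose 4)
     - 120 * a5 / P * real (n choose 5) + 720 / P * real (n choose 6)" for n
  have Fprod: "F n = (\<Prod>i\<in>{1..6::nat}. (m i - real n)) / P" for n
  proof -
    have "F n = (P - a1 * real n + a2 * (2*real (n choose 2)) - a3 * (6*real (n choose 3))
       + a4 * (24 * real (n choose 4)) - a5 * (120*real (n choose 5)) + 720 * real (n choose 6)) / P"
      unfolding F_def choose_one using Ppos by (intro lin) simp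
    also have "\<dots> = (P - M6 5 m * real n + M6 4 m * real n^2 - M6 3 m * real n^3 + M6 2 m * real n^4 - M6 1 m * real n^5 + real n^6) / P"
      unfolding b2 b3 b4 b5 b6 a1_def a2_def a3_def a4_def a5_def
      by (rule arg_cong[where f="\<lambda>t. t / P"], rule numer)
    also have "\<dots> = (\<Prod>i\<in>{1..6::nat}. (m i - real n)) / P"
      by (simp only: prodexp2 P_def)
    finally show ?thesis .
  qed
  have Fge: "(if n = 0 then 1 else 0) \<le> F n" for n
  proof (cases "n = 0")
    case True
    then show ?thesis by (simp add: F_def binomial_eq_0)
  next
    case False
    then have n1: "1 \<le> n" by simp
    have s: "{1..6::nat} = {1,2,3,4,5,6}" by auto
    have "(\<Prod>i\<in>{1..6::nat}. (m i - real n)) = ((m 1 - real n) * (m 2 - real n)) * ((m 3 - real n) * (m 4 - real n)) * ((m 5 - real n) * (m 6 - real n))"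
      unfolding s by (simp add: mult_ac)
    also have "\<dots> \<ge> 0"
      using pair_nonneg[OF assms(4) n1] pair_nonneg[OF assms(5) n1] pair_nonneg[OF assms(6) n1]
      by simp
    finally show ?thesis using False Ppos by (simp add: Fprod)
  qed
  have sums: "\<And>k. nest w k z (\<lambda>d. real (S (Ad A d) w)) = (\<Sum>a\<in>B0. real (N a choose k))"
    unfolding B0_def N_def by (rule count_nest[OF assms(1)])
  have e1: "(\<Sum>p1\<in>primes_in w z. real (S (Ad A p1) w)) = nest w 1 z (\<lambda>d. real (S (Ad A d) w))"
    by simp
  have e2: "(\<Sum>p1\<in>primes_in w z. \<Sum>p2\<in>primes_in w (real p1).
             real (S (Ad A (p1 * p2)) w)) = nest w 2 z (\<lambda>d. real (S (Ad A d) w))"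
    by (simp add: numeral_eq_Suc mult.assoc)
  have e3: "(\<Sum>p1\<in>primes_in w z. \<Sum>p2\<in>primes_in w (real p1).
           \<Sum>p3\<in>primes_in w (real p2).
             real (S (Ad A (p1 * p2 * p3)) w)) = nest w 3 z (\<lambda>d. real (S (Ad A d) w))"
    by (simp add: numeral_eq_Suc mult.assoc)
  have e4: "(\<Sum>p1\<in>primes_in w z. \<Sum>p2\<in>primes_in w (real p1).
           \<Sum>p3\<in>primes_in w (real p2). \<Sum>p4\<in>primes_in w (real p3).
             real (S (Ad A (p1 * p2 * p3 * p4)) w)) = nest w 4 z (\<lambda>d. real (S (Ad A d) w))"
    by (simp add: numeral_eq_Suc mult.assoc)
  have e5: "(\<Sum>p1\<in>primes_in w z. \<Sum>p2\<in>primes_in w (real p1).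
           \<Sum>p3\<in>primes_in w (real p2). \<Sum>p4\<in>primes_in w (real p3).
           \<Sum>p5\<in>primes_in w (real p4).
             real (S (Ad A (p1 * p2 * p3 * p4 * p5)) w)) = nest w 5 z (\<lambda>d. real (S (Ad A d) w))"
    by (simp add: numeral_eq_Suc mult.assoc)
  have e6: "(\<Sum>p1\<in>primes_in w z. \<Sum>p2\<in>primes_in w (real p1).
           \<Sum>p3\<in>primes_in w (real p2). \<Sum>p4\<in>primes_in w (real p3).
           \<Sum>p5\<in>primes_in w (real p4). \<Sum>p6\<in>primes_in w (real p5).
             real (S (Ad A (p1 * p2 * p3 * p4 * p5 * p6)) w)) = nest w 6 z (\<lambda>d. real (S (Ad A d) w))"
    by (simp add: numeral_eq_Suc mult.assoc)
  have SAw: "S A w = card B0" by (simp add: S_def B0_def A0_def)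
  have SAz: "S A z \<le> card {a\<in>B0. N a = 0}"
    unfolding S_def
  proof (rule card_mono)
    show "finite {a\<in>B0. N a = 0}" using fB0 by simp
    show "{a \<in> A. \<forall>p. prime p \<and> real p < z \<longrightarrow> \<not> p dvd a} \<subseteq> {a\<in>B0. N a = 0}"
    proof safe
      fix a assume a: "a \<in> A" "\<forall>p. prime p \<and> real p < z \<longrightarrow> \<not> p dvd a"
      show "a \<in> B0" using a assms(3) by (auto simp: B0_def A0_def)
      have "{p\<in>primes_in w z. p dvd a} = {}" using a by (auto simp: primes_in_def)
      then show "N a = 0" unfolding N_def by (metis card.empty)

    qed
  qed
  have "real (S A z) \<le> (\<Sum>a\<in>B0. if N a = 0 then 1 else 0)"
    using SAz fB0 by (simp add: sum.If_cases Int_def)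
  also have "\<dots> \<le> (\<Sum>a\<in>B0. F (N a))"
    by (rule sum_mono) (rule Fge)
  also have "\<dots> = real (card B0) - a1 / P * (\<Sum>a\<in>B0. real (N a choose 1))
     + 2 * a2 / P * (\<Sum>a\<in>B0. real (N a choose 2))
     - 6 * a3 / P * (\<Sum>a\<in>B0. real (N a choose 3))
     + 24 * a4 / P * (\<Sum>a\<in>B0. real (N a choose 4))
     - 120 * a5 / P * (\<Sum>a\<in>B0. real (N a choose 5))
     + 720 / P * (\<Sum>a\<in>B0. real (N a choose 6))"
    unfolding F_def by (simp add: sum.distrib sum_subtractf sum_distrib_left)
  finally show ?thesis
    unfolding e1 e2 e3 e4 e5 e6 sums SAw a1_def a2_def a3_def a4_def a5_def .
qed

end
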